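(* Let $n$ be a positive integer with $n\equiv 2 \pmod 3$. Then the $(3,n;6)$-bipartite biregular cage has exactly $2+2n+\frac{(2+2n)n}{3}$ vertices, and every $(3,n;6)$-bipartite biregular cage is (isomorphic to) the incidence graph of the structure obtained from a Steiner triple system on $2n+3$ points by deleting one point and all triples containing it.
   Context: For integers $a,b\geq 2$ and even $g\ge 4$, an $(a,b;g)$-bipartite biregular graph is a finite simple bipartite graph of girth exactly $g$ in which all vertices of one bipartition class have degree $a$ and all vertices of the other class have degree $b$. An $(a,b;g)$-bipartite biregular cage is such a graph of minimum possible order. A Steiner triple system on $v$ points is a set of $v$ points with a family of 3-element subsets (triples) such that every pair of distinct points lies in exactly one triple. The incidence graph of a point-triple structure is the bipartite graph on points and triples with a point adjacent to a triple iff the point lies in it. *)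

theory Defs
  imports Main
begin

definition simple_graph :: "'a set \<Rightarrow> ('a \<Rightarrow> 'a \<Rightarrow> bool) \<Rightarrow> bool" where
  "simple_graph V E \<longleftrightarrow> finite V \<and> (\<forall>u v. E u v \<longrightarrow> u \<in> V \<and> v \<in> V)
     \<and> (\<forall>u v. E u v \<longrightarrow> E v u) \<and> (\<forall>u. \<not> E u u)"

definition degree :: "'a set \<Rightarrow> ('a \<Rightarrow> 'a \<Rightarrow> bool) \<Rightarrow> 'a \<Rightarrow> nat" where
  "degree V E v = card {w \<in> V. E v w}"

definition is_cycle :: "'a set \<Rightarrow> ('a \<Rightarrow> 'a \<Rightarrow> bool) \<Rightarrow> 'a list \<Rightarrow> bool" where
  "is_cycle V E xs \<longleftrightarrow> length xs \<ge> 3 \<and> distinct xs \<and> set xs \<subseteq> V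
     \<and> (\<forall>i < length xs. E (xs ! i) (xs ! ((i + 1) mod length xs)))"

definition has_girth :: "'a set \<Rightarrow> ('a \<Rightarrow> 'a \<Rightarrow> bool) \<Rightarrow> nat \<Rightarrow> bool" where
  "has_girth V E g \<longleftrightarrow> (\<exists>xs. is_cycle V E xs \<and> length xs = g)
     \<and> (\<forall>xs. is_cycle V E xs \<longrightarrow> g \<le> length xs)"

definition bipartite_biregular :: "nat \<Rightarrow> nat \<Rightarrow> nat \<Rightarrow> 'a set \<Rightarrow> ('a \<Rightarrow> 'a \<Rightarrow> bool) \<Rightarrow> bool" where
  "bipartite_biregular a b g V E \<longleftrightarrow> simple_graph V E \<and> has_girth V E g \<and>
     (\<exists>A B. A \<union> B = V \<and> A \<inter> B = {} \<and>
        (\<forall>u v. E u v \<longrightarrow> (u \<in> A \<and> v \<in> B) \<or> (u \<in> B \<and> v \<in> A)) \<and>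
        (\<forall>v \<in> A. degree V E v = a) \<and> (\<forall>v \<in> B. degree V E v = b))"

text \<open>Cage: minimum order among all (a,b;g)-bipartite biregular graphs. Every finite
  graph is isomorphic to one on a set of naturals, so comparing with graphs on nat suffices.\<close>
definition bb_cage :: "nat \<Rightarrow> nat \<Rightarrow> nat \<Rightarrow> 'a set \<Rightarrow> ('a \<Rightarrow> 'a \<Rightarrow> bool) \<Rightarrow> bool" where
  "bb_cage a b g V E \<longleftrightarrow> bipartite_biregular a b g V E \<and>
     (\<forall>(V' :: nat set) E'. bipartite_biregular a b g V' E' \<longrightarrow> card V \<le> card V')"

definition graph_iso :: "'a set \<Rightarrow> ('a \<Rightarrow> 'a \<Rightarrow> bool) \<Rightarrow> 'b set \<Rightarrow> ('b \<Rightarrow> 'b \<Rightarrow> bool) \<Rightarrow> bool" where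
  "graph_iso V E V' E' \<longleftrightarrow> (\<exists>f. bij_betw f V V' \<and>
     (\<forall>u \<in> V. \<forall>v \<in> V. E u v \<longleftrightarrow> E' (f u) (f v)))"

definition steiner_triple_system :: "'p set \<Rightarrow> 'p set set \<Rightarrow> bool" where
  "steiner_triple_system P T \<longleftrightarrow> finite P \<and>
     (\<forall>t \<in> T. t \<subseteq> P \<and> card t = 3) \<and>
     (\<forall>x \<in> P. \<forall>y \<in> P. x \<noteq> y \<longrightarrow> (\<exists>!t. t \<in> T \<and> x \<in> t \<and> y \<in> t))"

definition incidence_vertices :: "'p set \<Rightarrow> 'p set set \<Rightarrow> ('p + 'p set) set" where
  "incidence_vertices P T = Inl ` P \<union> Inr ` T"

fun incidence_adj :: "'p set \<Rightarrow> 'p set set \<Rightarrow> ('p + 'p set) \<Rightarrow> ('p + 'p set) \<Rightarrow> bool" where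
  "incidence_adj P T (Inl p) (Inr t) = (p \<in> P \<and> t \<in> T \<and> p \<in> t)"
| "incidence_adj P T (Inr t) (Inl p) = (p \<in> P \<and> t \<in> T \<and> p \<in> t)"
| "incidence_adj P T _ _ = False"

definition del_points :: "'p set \<Rightarrow> 'p \<Rightarrow> 'p set" where
  "del_points P x = P - {x}"

definition del_triples :: "'p set set \<Rightarrow> 'p \<Rightarrow> 'p set set" where
  "del_triples T x = {t \<in> T. x \<notin> t}"

end

theory Submission
  imports Defs
begin
lemma cycle4:
  assumes sg: "simple_graph V E" and "E u v" "E v w" "E w z" "E z u" "u \<noteq> w" "v \<noteq> z"
  shows "is_cycle V E [u,v,w,z]"
proof -
  have irr: "\<And>x. \<not> E x x" using sg by (simp add: simple_graph_def)
  have inV: "\<And>x y. E x y \<Longrightarrow> x \<in> V \<and> y \<in> V" using sg by (simp add: simple_graph_def)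
  have "u \<noteq> v" "v \<noteq> w" "w \<noteq> z" "z \<noteq> u" using assms(2-5) irr by metis+
  moreover have "\<forall>i < 4. E ([u,v,w,z] ! i) ([u,v,w,z] ! ((i + 1) mod 4))"
  proof (intro allI impI)
    fix i :: nat assume "i < 4"
    then have "i = 0 \<or> i = 1 \<or> i = 2 \<or> i = 3" by linarith
    then show "E ([u,v,w,z] ! i) ([u,v,w,z] ! ((i + 1) mod 4))" using assms by auto
  qed
  ultimately show ?thesis using assms inV unfolding is_cycle_def by simp
qed

lemma noC4:
  assumes sg: "simple_graph V E" and g: "has_girth V E 6"
    and "E u v" "E v w" "E w z" "E z u" "u \<noteq> w" "v \<noteq> z"
  shows False
proof -
  have "is_cycle V E [u,v,w,z]" by (rule cycle4[OF sg assms(3-8)])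
  moreover have "\<forall>xs. is_cycle V E xs \<longrightarrow> 6 \<le> length xs" using g unfolding has_girth_def by blast
  ultimately have "6 \<le> length [u,v,w,z]" by blast
  then show False by simp
qed

lemma list3: "length xs = 3 \<Longrightarrow> \<exists>a b c. xs = [a,b,c]"
  by (auto simp: length_Suc_conv numeral_eq_Suc)
lemma list4: "length xs = 4 \<Longrightarrow> \<exists>a b c d. xs = [a,b,c,d]"
  by (auto simp: length_Suc_conv numeral_eq_Suc)
lemma list5: "length xs = 5 \<Longrightarrow> \<exists>a b c d e. xs = [a,b,c,d,e]"
  by (auto simp: length_Suc_conv numeral_eq_Suc)

lemma cycles_ge6:
  assumes sg: "simple_graph V E"
    and AB: "A \<union> B = V" "A \<inter> B = {}" "\<forall>u v. E u v \<longrightarrow> (u \<in> A \<and> v \<in> B) \<or> (u \<in> B \<and> v \<in> A)"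
    and nc4: "\<And>u v w z. E u v \<Longrightarrow> E v w \<Longrightarrow> E w z \<Longrightarrow> E z u \<Longrightarrow> u \<noteq> w \<Longrightarrow> v \<noteq> z \<Longrightarrow> False"
    and cyc: "is_cycle V E xs"
  shows "6 \<le> length xs"
proof (rule ccontr)
  assume "\<not> 6 \<le> length xs"
  moreover have "length xs \<ge> 3" using cyc by (simp add: is_cycle_def)
  ultimately have "length xs = 3 \<or> length xs = 4 \<or> length xs = 5" by linarith
  moreover have adj: "\<forall>i < length xs. E (xs ! i) (xs ! ((i + 1) mod length xs))" and d: "distinct xs"
    using cyc by (auto simp: is_cycle_def)
  ultimately consider (c3) "\<exists>a b c. xs = [a,b,c]" | (c4) "\<exists>a b c d. xs = [a,b,c,d]" | (c5) "\<exists>a b c d e. xs = [a,b,c,d,e]"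
    using list3 list4 list5 by blast
  then show False
  proof cases
    case c3
    then obtain a b c where x: "xs = [a,b,c]" by blast
    have "E a b" "E b c" "E c a" using adj[rule_format, of 0] adj[rule_format, of 1] adj[rule_format, of 2] x by auto
    then show False using AB(2) AB(3)[rule_format, of a b] AB(3)[rule_format, of b c] AB(3)[rule_format, of c a] by blast
  next
    case c4
    then obtain a b c d where x: "xs = [a,b,c,d]" by blast
    have "E a b" "E b c" "E c d" "E d a" using adj[rule_format, of 0] adj[rule_format, of 1] adj[rule_format, of 2] adj[rule_format, of 3] x by auto
    moreover have "a \<noteq> c" "b \<noteq> d" using d x by auto
    ultimately show False using nc4 by blast
  next
    case c5
    then obtain a b c d e where x: "xs = [a,b,c,d,e]" by blast
    have "E a b" "E b c" "E c d" "E d e" "E e a" using adj[rule_format, of 0] adj[rule_format, of 1] adj[rule_format, of 2] adj[rule_format, of 3] adj[rule_format, of 4] x by auto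
    then show False using AB(2) AB(3)[rule_format, of a b] AB(3)[rule_format, of b c] AB(3)[rule_format, of c d]
      AB(3)[rule_format, of d e] AB(3)[rule_format, of e a] by blast
  qed
qed

lemma double_count:
  assumes fin: "finite V" and AB: "A \<union> B = V" "A \<inter> B = {}"
    "\<forall>u v. E u v \<longrightarrow> (u \<in> A \<and> v \<in> B) \<or> (u \<in> B \<and> v \<in> A)"
    and sym: "\<forall>u v. E u v \<longrightarrow> E v u"
    and dA: "\<forall>v \<in> A. degree V E v = a" and dB: "\<forall>v \<in> B. degree V E v = b"
  shows "a * card A = b * card B"
proof -
  have fA: "finite A" and fB: "finite B" using fin AB by auto
  have 1: "\<And>v. v \<in> A \<Longrightarrow> {w \<in> V. E v w} = {w \<in> B. E v w}" using AB by blast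
  have 2: "\<And>v. v \<in> B \<Longrightarrow> {w \<in> V. E v w} = {w \<in> A. E v w}" using AB by blast
  have "a * card A = (\<Sum>v\<in>A. card {w \<in> B. E v w})"
    using dA 1 by (simp add: degree_def)
  also have "\<dots> = card (Sigma A (\<lambda>v. {w \<in> B. E v w}))" using fA fB by (simp add: card_SigmaI)
  also have "Sigma A (\<lambda>v. {w \<in> B. E v w}) = (\<lambda>(x,y). (y,x)) ` Sigma B (\<lambda>v. {w \<in> A. E v w})"
    using sym by (auto simp: image_iff)
  also have "card \<dots> = card (Sigma B (\<lambda>v. {w \<in> A. E v w}))"
    by (rule card_image) (auto simp: inj_on_def)
  also have "\<dots> = (\<Sum>v\<in>B. card {w \<in> A. E v w})" using fA fB by (simp add: card_SigmaI)
  also have "\<dots> = b * card B" using dB 2 by (simp add: degree_def)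
  finally show ?thesis .
qed

lemma disj_count:
  assumes "finite I" "\<And>i. i \<in> I \<Longrightarrow> p \<in> F i \<and> card (F i) = 3"
    "\<And>i j. i \<in> I \<Longrightarrow> j \<in> I \<Longrightarrow> i \<noteq> j \<Longrightarrow> F i \<inter> F j \<subseteq> {p}"
  shows "card (\<Union>i\<in>I. F i - {p}) = 2 * card I"
proof -
  have fin: "\<And>i. i \<in> I \<Longrightarrow> finite (F i)" using assms(2) by (metis card.infinite zero_neq_numeral)
  have "card (\<Union>i\<in>I. F i - {p}) = (\<Sum>i\<in>I. card (F i - {p}))"
    apply (rule card_UN_disjoint) using assms fin by auto
  also have "\<dots> = (\<Sum>i\<in>I. 2)" using assms(2) fin by (intro sum.cong) (auto simp: card_Diff_singleton)
  finally show ?thesis by simp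
qed

lemma mod3_lemma:
  fixes n c a :: nat
  assumes "n mod 3 = 2" "3 * a = n * c" "2 * n + 1 \<le> c"
  shows "2 * n + 2 \<le> c"
proof -
  have "(n * c) mod 3 = 0" using assms(2) by (metis mod_mult_self1_is_0 mult.commute)
  then have "((n mod 3) * (c mod 3)) mod 3 = 0" by (metis mod_mult_eq)
  then have "(2 * (c mod 3)) mod 3 = 0" using assms(1) by simp
  then have "c mod 3 = 0" by presburger
  then show ?thesis using assms(1,3) by presburger
qed

lemma nbr_count:
  assumes sg: "simple_graph V E" and g: "has_girth V E 6"
    and AB: "A \<union> B = V" "A \<inter> B = {}" "\<forall>u v. E u v \<longrightarrow> (u \<in> A \<and> v \<in> B) \<or> (u \<in> B \<and> v \<in> A)"
    and dA: "\<forall>v \<in> A. degree V E v = 3" and dB: "\<forall>v \<in> B. degree V E v = n"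
    and p: "p \<in> B"
  shows "card (\<Union>a\<in>{w \<in> V. E p w}. {w \<in> V. E a w} - {p}) = 2 * n"
    and "(\<Union>a\<in>{w \<in> V. E p w}. {w \<in> V. E a w} - {p}) \<subseteq> B - {p}"
proof -
  have fin: "finite V" and sym: "\<And>u v. E u v \<Longrightarrow> E v u" and inV: "\<And>u v. E u v \<Longrightarrow> u \<in> V \<and> v \<in> V"
    using sg by (auto simp: simple_graph_def)
  let ?I = "{w \<in> V. E p w}"
  have cI: "card ?I = n" using dB p by (simp add: degree_def)
  have IA: "\<And>a. a \<in> ?I \<Longrightarrow> a \<in> A" using AB(2,3) p by blast
  have "card (\<Union>a\<in>?I. {w \<in> V. E a w} - {p}) = 2 * card ?I"
  proof (rule disj_count)
    show "finite ?I" using fin by simp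
    show "p \<in> {w \<in> V. E i w} \<and> card {w \<in> V. E i w} = 3" if "i \<in> ?I" for i
      using that IA[OF that] dA sym inV by (auto simp: degree_def)
    show "{w \<in> V. E i w} \<inter> {w \<in> V. E j w} \<subseteq> {p}" if "i \<in> ?I" "j \<in> ?I" "i \<noteq> j" for i j
    proof
      fix q assume q: "q \<in> {w \<in> V. E i w} \<inter> {w \<in> V. E j w}"
      show "q \<in> {p}"
      proof (rule ccontr)
        assume "q \<notin> {p}"
        then have "p \<noteq> q" by simp
        moreover have "E p i" "E i q" "E q j" "E j p" using that q sym by auto
        ultimately show False using noC4[OF sg g] that(3) by blast
      qed
    qed
  qed
  then show "card (\<Union>a\<in>?I. {w \<in> V. E a w} - {p}) = 2 * n" using cI by simp
  show "(\<Union>a\<in>?I. {w \<in> V. E a w} - {p}) \<subseteq> B - {p}"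
    using IA AB(2,3) by blast
qed

lemma lower_bound:
  assumes sg: "simple_graph V E" and g: "has_girth V E 6"
    and AB: "A \<union> B = V" "A \<inter> B = {}" "\<forall>u v. E u v \<longrightarrow> (u \<in> A \<and> v \<in> B) \<or> (u \<in> B \<and> v \<in> A)"
    and dA: "\<forall>v \<in> A. degree V E v = 3" and dB: "\<forall>v \<in> B. degree V E v = n"
    and n3: "n mod 3 = 2"
  shows "2 * n + 2 \<le> card B" "3 * card A = n * card B" "card V = card A + card B"
proof -
  have fin: "finite V" and sym: "\<forall>u v. E u v \<longrightarrow> E v u"
    using sg by (auto simp: simple_graph_def)
  obtain xs where xs: "is_cycle V E xs" "length xs = 6" using g by (auto simp: has_girth_def)
  then have "E (xs ! 0) (xs ! 1)" unfolding is_cycle_def by (metis One_nat_def mod_less numeral_eq_Suc zero_less_numeral Suc_lessI one_less_numeral_iff semiring_norm(76) add.commute plus_1_eq_Suc)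
  then obtain p where p: "p \<in> B" using AB(3) by blast
  have c1: "card (\<Union>a\<in>{w \<in> V. E p w}. {w \<in> V. E a w} - {p}) = 2 * n"
    and s1: "(\<Union>a\<in>{w \<in> V. E p w}. {w \<in> V. E a w} - {p}) \<subseteq> B - {p}"
    using nbr_count[OF sg g AB dA dB p] by auto
  have fB: "finite B" using fin AB by auto
  have "2 * n \<le> card (B - {p})" using card_mono[OF _ s1] fB c1 by simp
  moreover have "card B > 0" using p fB card_gt_0_iff by blast
  ultimately have c2: "2 * n + 1 \<le> card B" using p fB by (simp add: card_Diff_singleton)
  show dc: "3 * card A = n * card B" using double_count[OF fin AB sym dA dB] .
  show "2 * n + 2 \<le> card B" using mod3_lemma[OF n3 dc c2] .
  show "card V = card A + card B" using AB fin by (metis card_Un_disjoint finite_Un)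
qed

lemma to_sts:
  assumes sg: "simple_graph V E" and g: "has_girth V E 6"
    and AB: "A \<union> B = V" "A \<inter> B = {}" "\<forall>u v. E u v \<longrightarrow> (u \<in> A \<and> v \<in> B) \<or> (u \<in> B \<and> v \<in> A)"
    and dA: "\<forall>v \<in> A. degree V E v = 3" and dB: "\<forall>v \<in> B. degree V E v = n"
    and cB: "card B = 2 * n + 2"
  shows "\<exists>(P :: nat set) T x. steiner_triple_system P T \<and> card P = 2 * n + 3 \<and> x \<in> P \<and>
            graph_iso V E
              (incidence_vertices (del_points P x) (del_triples T x))
              (incidence_adj (del_points P x) (del_triples T x))"
proof -
  have fin: "finite V" and sym: "\<And>u v. E u v \<Longrightarrow> E v u" and inV: "\<And>u v. E u v \<Longrightarrow> u \<in> V \<and> v \<in> V"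
    and irr: "\<And>u. \<not> E u u"
    using sg by (auto simp: simple_graph_def)
  have c4: "\<And>u v w z. E u v \<Longrightarrow> E v w \<Longrightarrow> E w z \<Longrightarrow> E z u \<Longrightarrow> u \<noteq> w \<Longrightarrow> v \<noteq> z \<Longrightarrow> False"
    using noC4[OF sg g] by blast
  have fB: "finite B" using fin AB by auto
  define N where "N v = {w \<in> V. E v w}" for v
  define coll where "coll p q \<longleftrightarrow> (\<exists>a. E p a \<and> E a q)" for p q
  have coll_sym: "\<And>p q. coll p q \<Longrightarrow> coll q p" unfolding coll_def using sym by blast
  have NB: "\<And>a. a \<in> A \<Longrightarrow> N a \<subseteq> B" unfolding N_def using AB by blast
  have N3: "\<And>a. a \<in> A \<Longrightarrow> card (N a) = 3" unfolding N_def using dA by (simp add: degree_def)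
  have BA: "\<And>p a. p \<in> B \<Longrightarrow> E p a \<Longrightarrow> a \<in> A" using AB by blast
  have mate: "\<exists>!q. q \<in> B \<and> q \<noteq> p \<and> \<not> coll p q" if p: "p \<in> B" for p
  proof -
    let ?U = "\<Union>a\<in>{w \<in> V. E p w}. {w \<in> V. E a w} - {p}"
    have cU: "card ?U = 2 * n" and sU: "?U \<subseteq> B - {p}" using nbr_count[OF sg g AB dA dB p] by auto
    have eq: "B - {p} - ?U = {q. q \<in> B \<and> q \<noteq> p \<and> \<not> coll p q}"
      unfolding coll_def using inV by blast
    have "card (B - {p} - ?U) = card (B - {p}) - card ?U" using sU fB by (meson card_Diff_subset finite_Diff finite_subset)
    also have "\<dots> = 1" using cU cB p fB by (simp add: card_Diff_singleton)
    finally have "card {q. q \<in> B \<and> q \<noteq> p \<and> \<not> coll p q} = 1" using eq by simp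
    then obtain q where qq: "{q. q \<in> B \<and> q \<noteq> p \<and> \<not> coll p q} = {q}" using card_1_singletonE by blast
    have "\<And>x. (x \<in> B \<and> x \<noteq> p \<and> \<not> coll p x) \<longleftrightarrow> x = q"
    proof -
      fix x show "(x \<in> B \<and> x \<noteq> p \<and> \<not> coll p x) \<longleftrightarrow> x = q"
        using qq by blast
    qed
    then show ?thesis by (intro ex1I[of _ q]) auto
  qed
  obtain f where f: "bij_betw f B {0..<2*n+2}" using ex_bij_betw_finite_nat[OF fB] cB by auto
  have finj: "\<And>p q. p \<in> B \<Longrightarrow> q \<in> B \<Longrightarrow> f p = f q \<longleftrightarrow> p = q" using f unfolding bij_betw_def inj_on_def by blast
  have fr: "\<And>p. p \<in> B \<Longrightarrow> f p < 2*n+2" using f by (auto simp: bij_betw_def)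
  have fimg: "f ` B = {0..<2*n+2}" using f by (simp add: bij_betw_def)
  define x0 where "x0 = 2*n+2"
  define P where "P = {0..<2*n+3}"
  define TA where "TA = (\<lambda>a. f ` N a) ` A"
  define TM where "TM = {{x0, f p, f q} | p q. p \<in> B \<and> q \<in> B \<and> p \<noteq> q \<and> \<not> coll p q}"
  define T where "T = TA \<union> TM"
  have fx0: "\<And>p. p \<in> B \<Longrightarrow> f p \<noteq> x0" using fr x0_def by fastforce
  have fN: "\<And>p a. p \<in> B \<Longrightarrow> a \<in> A \<Longrightarrow> f p \<in> f ` N a \<longleftrightarrow> p \<in> N a"
    using f NB by (meson bij_betw_def inj_on_image_mem_iff)
  have x0N: "\<And>a. a \<in> A \<Longrightarrow> x0 \<notin> f ` N a" using fx0 NB by blast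
  have Pcases: "\<And>y. y \<in> P \<Longrightarrow> y = x0 \<or> (\<exists>p\<in>B. y = f p)"
  proof -
    fix y assume "y \<in> P"
    then have "y = x0 \<or> y \<in> {0..<2*n+2}" unfolding P_def x0_def by auto
    then show "y = x0 \<or> (\<exists>p\<in>B. y = f p)" using fimg by blast
  qed
  have px0: "\<exists>!t. t \<in> T \<and> x0 \<in> t \<and> f p \<in> t" if p: "p \<in> B" for p
  proof -
    obtain m where m: "m \<in> B" "m \<noteq> p" "\<not> coll p m" and mu: "\<And>q. q \<in> B \<Longrightarrow> q \<noteq> p \<Longrightarrow> \<not> coll p q \<Longrightarrow> q = m"
      using mate[OF p] by blast
    show ?thesis
    proof (rule ex1I[of _ "{x0, f p, f m}"])
      show "{x0, f p, f m} \<in> T \<and> x0 \<in> {x0, f p, f m} \<and> f p \<in> {x0, f p, f m}"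
        unfolding T_def TM_def using m p by blast
      fix t assume t: "t \<in> T \<and> x0 \<in> t \<and> f p \<in> t"
      then have "t \<in> TM" unfolding T_def TA_def using x0N by blast
      then obtain p1 q1 where pq: "p1 \<in> B" "q1 \<in> B" "p1 \<noteq> q1" "\<not> coll p1 q1" "t = {x0, f p1, f q1}"
        unfolding TM_def by blast
      then have "f p = f p1 \<or> f p = f q1" using t fx0[OF p] by blast
      then have "p = p1 \<or> p = q1" using finj p pq by blast
      then show "t = {x0, f p, f m}"
      proof
        assume "p = p1" then have "q1 = m" using mu pq by blast
        then show ?thesis using pq \<open>p = p1\<close> by simp
      next
        assume "p = q1" then have "p1 = m" using mu pq coll_sym by blast
        then show ?thesis using pq \<open>p = q1\<close> by blast
      qed
    qed
  qed
  have pqB: "\<exists>!t. t \<in> T \<and> f p \<in> t \<and> f q \<in> t" if p: "p \<in> B" and q: "q \<in> B" and pq: "p \<noteq> q" for p q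
  proof (cases "coll p q")
    case True
    then obtain a where a: "E p a" "E a q" unfolding coll_def by blast
    have aA: "a \<in> A" using BA p a by blast
    show ?thesis
    proof (rule ex1I[of _ "f ` N a"])
      show "f ` N a \<in> T \<and> f p \<in> f ` N a \<and> f q \<in> f ` N a"
        unfolding T_def TA_def N_def using aA a sym inV by blast
      fix t assume t: "t \<in> T \<and> f p \<in> t \<and> f q \<in> t"
      show "t = f ` N a"
      proof (cases "t \<in> TA")
        case True
        then obtain a' where a': "a' \<in> A" "t = f ` N a'" unfolding TA_def by blast
        then have "p \<in> N a'" "q \<in> N a'" using fN p q t by auto
        then have "E q a'" "E a' p" using sym unfolding N_def by auto
        then have "a' = a" using c4[of p a q a'] a pq by blast
        then show ?thesis using a' by simp
      next
        case False
        then have "t \<in> TM" using t T_def by blast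
        then obtain p1 q1 where pq1: "p1 \<in> B" "q1 \<in> B" "p1 \<noteq> q1" "\<not> coll p1 q1" "t = {x0, f p1, f q1}"
          unfolding TM_def by blast
        have "(p = p1 \<or> p = q1) \<and> (q = p1 \<or> q = q1)" using t fx0 p q pq1 finj by auto
        then have "coll p1 q1" using True coll_sym pq by blast
        then show ?thesis using pq1 by blast
      qed
    qed
  next
    case False
    show ?thesis
    proof (rule ex1I[of _ "{x0, f p, f q}"])
      show "{x0, f p, f q} \<in> T \<and> f p \<in> {x0, f p, f q} \<and> f q \<in> {x0, f p, f q}"
        unfolding T_def TM_def using p q pq False by blast
      fix t assume t: "t \<in> T \<and> f p \<in> t \<and> f q \<in> t"
      show "t = {x0, f p, f q}"
      proof (cases "t \<in> TA")
        case True
        then obtain a' where a': "a' \<in> A" "t = f ` N a'" unfolding TA_def by blast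
        then have "p \<in> N a'" "q \<in> N a'" using fN p q t by auto
        then have "coll p q" unfolding coll_def N_def using sym by blast
        then show ?thesis using False by blast
      next
        case False
        then have "t \<in> TM" using t T_def by blast
        then obtain p1 q1 where pq1: "p1 \<in> B" "q1 \<in> B" "p1 \<noteq> q1" "\<not> coll p1 q1" "t = {x0, f p1, f q1}"
          unfolding TM_def by blast
        have "(p = p1 \<or> p = q1) \<and> (q = p1 \<or> q = q1)" using t fx0 p q pq1 finj by auto
        then show ?thesis using pq1 pq by auto
      qed
    qed
  qed
  have sts: "steiner_triple_system P T"
    unfolding steiner_triple_system_def
  proof (intro conjI ballI impI)
    show "finite P" unfolding P_def by simp
  next
    fix t assume t: "t \<in> T"
    show "t \<subseteq> P"
    proof (cases "t \<in> TA")
      case True then obtain a where "a \<in> A" "t = f ` N a" unfolding TA_def by blast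
      then show ?thesis using NB fr unfolding P_def by fastforce
    next
      case False then have "t \<in> TM" using t T_def by blast
      then show ?thesis using fr unfolding TM_def P_def x0_def by fastforce
    qed
    show "card t = 3"
    proof (cases "t \<in> TA")
      case True then obtain a where a: "a \<in> A" "t = f ` N a" unfolding TA_def by blast
      have "inj_on f (N a)" using f NB[OF a(1)] by (meson bij_betw_def inj_on_subset)
      then show ?thesis using a N3 by (simp add: card_image)
    next
      case False then have "t \<in> TM" using t T_def by blast
      then obtain p1 q1 where pq1: "p1 \<in> B" "q1 \<in> B" "p1 \<noteq> q1" "t = {x0, f p1, f q1}"
          unfolding TM_def by blast
      then have "f p1 \<noteq> f q1" using finj by blast
      then show ?thesis using pq1 fx0 by (simp add: eq_commute)
    qed
  next
    fix y z assume y: "y \<in> P" and z: "z \<in> P" and yz: "y \<noteq> z"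
    show "\<exists>!t. t \<in> T \<and> y \<in> t \<and> z \<in> t"
    proof (cases "y = x0")
      case True
      then obtain q where "q \<in> B" "z = f q" using Pcases[OF z] yz by blast
      then show ?thesis using px0 True by blast
    next
      case False
      then obtain p where p: "p \<in> B" "y = f p" using Pcases[OF y] by blast
      show ?thesis
      proof (cases "z = x0")
        case True
        have "\<exists>!t. t \<in> T \<and> x0 \<in> t \<and> f p \<in> t" using px0 p by blast
        moreover have "\<And>t. (t \<in> T \<and> y \<in> t \<and> z \<in> t) = (t \<in> T \<and> x0 \<in> t \<and> f p \<in> t)" using True p by blast
        ultimately show ?thesis by simp
      next
        case False
        then obtain q where q: "q \<in> B" "z = f q" using Pcases[OF z] by blast
        then have "p \<noteq> q" using yz p by blast
        then show ?thesis using pqB p q by blast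
      qed
    qed
  qed
  have cP: "card P = 2 * n + 3" unfolding P_def by simp
  have x0P: "x0 \<in> P" unfolding P_def x0_def by simp
  have dP: "del_points P x0 = {0..<2*n+2}" unfolding del_points_def P_def x0_def by auto
  have dT: "del_triples T x0 = TA"
    unfolding del_triples_def T_def TM_def TA_def using x0N by blast
  define h where "h v = (if v \<in> B then Inl (f v) else Inr (f ` N v))" for v
  have hB: "\<And>v. v \<in> B \<Longrightarrow> h v = Inl (f v)" unfolding h_def by simp
  have hA: "\<And>v. v \<in> A \<Longrightarrow> h v = Inr (f ` N v)" unfolding h_def using AB by auto
  have Ninj: "\<And>a a'. a \<in> A \<Longrightarrow> a' \<in> A \<Longrightarrow> f ` N a = f ` N a' \<Longrightarrow> a = a'"
  proof (rule ccontr)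
    fix a a' assume a: "a \<in> A" "a' \<in> A" "f ` N a = f ` N a'" "a \<noteq> a'"
    have "inj_on f B" using f by (simp add: bij_betw_def)
    then have "N a = N a'" using a NB by (meson inj_on_image_eq_iff)
    have "card (N a) = 3" using N3 a by simp
    then obtain u w z where "N a = {u,w,z}" "u \<noteq> w" unfolding card_3_iff by blast
    then have "u \<in> N a" "w \<in> N a" "u \<noteq> w" by auto
    then show False using c4[of u a w a'] \<open>N a = N a'\<close> a(4) sym unfolding N_def by auto
  qed
  have iso: "graph_iso V E (incidence_vertices {0..<2*n+2} TA) (incidence_adj {0..<2*n+2} TA)"
    unfolding graph_iso_def
  proof (intro exI conjI)
    show "bij_betw h V (incidence_vertices {0..<2*n+2} TA)"
      unfolding bij_betw_def
    proof
      show "inj_on h V"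
      proof
        fix u v assume u: "u \<in> V" and v: "v \<in> V" and e: "h u = h v"
        show "u = v"
        proof (cases "u \<in> B")
          case True
          then show ?thesis
          proof (cases "v \<in> B")
            case True then show ?thesis using \<open>u \<in> B\<close> e hB finj by force
          next
            case False then have "v \<in> A" using v AB by blast
            then show ?thesis using e hA hB \<open>u \<in> B\<close> by force
          qed
        next
          case False then have uA: "u \<in> A" using u AB by blast
          show ?thesis
          proof (cases "v \<in> B")
            case True then show ?thesis using e hA hB uA by force
          next
            case False then have "v \<in> A" using v AB by blast
            then show ?thesis using e hA uA Ninj by force
          qed
        qed
      qed
      show "h ` V = incidence_vertices {0..<2*n+2} TA"
        unfolding incidence_vertices_def
      proof
        show "h ` V \<subseteq> Inl ` {0..<2 * n + 2} \<union> Inr ` TA"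
          using hA hB fimg AB unfolding TA_def by blast
        show "Inl ` {0..<2 * n + 2} \<union> Inr ` TA \<subseteq> h ` V"
        proof
          fix y assume "y \<in> Inl ` {0..<2 * n + 2} \<union> Inr ` TA"
          then consider (l) p where "p \<in> B" "y = Inl (f p)" | (r) a where "a \<in> A" "y = Inr (f ` N a)"
            using fimg unfolding TA_def by blast
          then show "y \<in> h ` V"
          proof cases
            case l then show ?thesis using hB AB by (metis UnCI image_eqI)
          next
            case r then show ?thesis using hA AB by (metis UnCI image_eqI)
          qed
        qed
      qed
    qed
    show "\<forall>u\<in>V. \<forall>v\<in>V. E u v = incidence_adj {0..<2*n+2} TA (h u) (h v)"
    proof (intro ballI)
      fix u v assume u: "u \<in> V" and v: "v \<in> V"
      consider "u \<in> B" "v \<in> B" | "u \<in> B" "v \<in> A" | "u \<in> A" "v \<in> B" | "u \<in> A" "v \<in> A"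
        using u v AB by blast
      then show "E u v = incidence_adj {0..<2*n+2} TA (h u) (h v)"
      proof cases
        case 1
        have "\<not> E u v" using 1 AB(2) AB(3) by blast
        then show ?thesis using hB 1 by simp
      next
        case 2
        have "incidence_adj {0..<2*n+2} TA (h u) (h v) \<longleftrightarrow> u \<in> N v"
          using 2 hA hB fr fN unfolding TA_def by auto
        also have "\<dots> \<longleftrightarrow> E u v" unfolding N_def using u sym by blast
        finally show ?thesis by simp
      next
        case 3
        have "incidence_adj {0..<2*n+2} TA (h u) (h v) \<longleftrightarrow> v \<in> N u"
          using 3 hA hB fr fN unfolding TA_def by auto
        also have "\<dots> \<longleftrightarrow> E u v" unfolding N_def using v by blast
        finally show ?thesis by simp
      next
        case 4
        have "\<not> E u v" using 4 AB(2) AB(3) by blast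
        then show ?thesis using hA 4 by simp
      qed
    qed
  qed
  show ?thesis using sts cP x0P iso dP dT by metis
qed

lemma cycle_map:
  assumes inj: "inj_on f V" and EE: "\<And>x y. x \<in> V \<Longrightarrow> y \<in> V \<Longrightarrow> E' (f x) (f y) \<longleftrightarrow> E x y"
    and c: "is_cycle V E xs"
  shows "is_cycle (f ` V) E' (map f xs)"
proof -
  have s: "set xs \<subseteq> V" and d: "distinct xs" and l: "length xs \<ge> 3"
    and a: "\<forall>i < length xs. E (xs ! i) (xs ! ((i + 1) mod length xs))" using c by (auto simp: is_cycle_def)
  have "distinct (map f xs)" using d s inj by (simp add: distinct_map inj_on_subset)
  moreover have "\<forall>i < length (map f xs). E' (map f xs ! i) (map f xs ! ((i + 1) mod length (map f xs)))"
  proof (intro allI impI)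
    fix i assume i: "i < length (map f xs)"
    then have i: "i < length xs" by simp
    have "length xs > 0" using l by linarith
    then have m: "(i + 1) mod length xs < length xs" by simp
    have "xs ! i \<in> V" "xs ! ((i + 1) mod length xs) \<in> V" using s i m nth_mem by blast+
    then have "E' (f (xs ! i)) (f (xs ! ((i + 1) mod length xs)))" using EE a i by blast
    then show "E' (map f xs ! i) (map f xs ! ((i + 1) mod length (map f xs)))" using i m by simp
  qed
  ultimately show ?thesis using s l unfolding is_cycle_def by auto
qed

lemma transfer_nat:
  assumes bb: "bipartite_biregular a b g (V :: 'b set) E"
  shows "\<exists>(V' :: nat set) E'. bipartite_biregular a b g V' E' \<and> card V' = card V"
proof -
  have sg: "simple_graph V E" and gi: "has_girth V E g" using bb by (auto simp: bipartite_biregular_def)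
  obtain A B where AB: "A \<union> B = V" "A \<inter> B = {}" "\<forall>u v. E u v \<longrightarrow> (u \<in> A \<and> v \<in> B) \<or> (u \<in> B \<and> v \<in> A)"
    "\<forall>v \<in> A. degree V E v = a" "\<forall>v \<in> B. degree V E v = b" using bb by (auto simp: bipartite_biregular_def)
  have fin: "finite V" and sym: "\<And>u v. E u v \<Longrightarrow> E v u" and inV: "\<And>u v. E u v \<Longrightarrow> u \<in> V \<and> v \<in> V"
    and irr: "\<And>u. \<not> E u u" using sg by (auto simp: simple_graph_def)
  obtain f where f: "bij_betw f V {0..<card V}" using ex_bij_betw_finite_nat[OF fin] by blast
  have inj: "inj_on f V" using f by (simp add: bij_betw_def)
  define E' where "E' u v \<longleftrightarrow> (\<exists>x y. x \<in> V \<and> y \<in> V \<and> E x y \<and> u = f x \<and> v = f y)" for u v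
  have EE: "\<And>x y. x \<in> V \<Longrightarrow> y \<in> V \<Longrightarrow> E' (f x) (f y) \<longleftrightarrow> E x y"
    unfolding E'_def using inj by (metis inj_on_def)
  have sg': "simple_graph (f ` V) E'"
    unfolding simple_graph_def
  proof (intro conjI allI impI)
    show "finite (f ` V)" using fin by simp
  next
    fix u v assume "E' u v" then show "u \<in> f ` V" "v \<in> f ` V" unfolding E'_def by auto
  next
    fix u v assume "E' u v" then show "E' v u" unfolding E'_def using sym by blast
  next
    fix u show "\<not> E' u u" unfolding E'_def using irr inj by (metis inj_on_def)
  qed
  have gi': "has_girth (f ` V) E' g"
    unfolding has_girth_def
  proof (intro conjI allI impI)
    obtain xs where "is_cycle V E xs" "length xs = g" using gi by (auto simp: has_girth_def)
    then show "\<exists>xs. is_cycle (f ` V) E' xs \<and> length xs = g"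
      using cycle_map[of f V E' E, OF inj EE] by (metis length_map)
  next
    fix ys assume ys: "is_cycle (f ` V) E' ys"
    define gg where "gg = inv_into V f"
    have inj2: "inj_on gg (f ` V)" unfolding gg_def by (simp add: inj_on_inv_into)
    have gV: "gg ` (f ` V) = V" unfolding gg_def using inj by simp
    have EE2: "\<And>x y. x \<in> f ` V \<Longrightarrow> y \<in> f ` V \<Longrightarrow> E (gg x) (gg y) \<longleftrightarrow> E' x y"
    proof -
      fix x y assume "x \<in> f ` V" "y \<in> f ` V"
      then obtain x0 y0 where "x0 \<in> V" "y0 \<in> V" "x = f x0" "y = f y0" by blast
      then show "E (gg x) (gg y) \<longleftrightarrow> E' x y" using EE inj unfolding gg_def by simp
    qed
    have "is_cycle (gg ` f ` V) E (map gg ys)" using cycle_map[OF inj2 EE2 ys] .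
    then have "is_cycle V E (map gg ys)" using gV by simp
    then have "g \<le> length (map gg ys)" using gi by (auto simp: has_girth_def)
    then show "g \<le> length ys" by simp
  qed
  have deg: "\<And>v. v \<in> V \<Longrightarrow> degree (f ` V) E' (f v) = degree V E v"
  proof -
    fix v assume v: "v \<in> V"
    have "{w \<in> f ` V. E' (f v) w} = f ` {w \<in> V. E v w}" using EE v by auto
    moreover have "inj_on f {w \<in> V. E v w}" using inj by (rule inj_on_subset) auto
    ultimately show "degree (f ` V) E' (f v) = degree V E v" unfolding degree_def by (simp add: card_image)
  qed
  have "\<exists>A' B'. A' \<union> B' = f ` V \<and> A' \<inter> B' = {} \<and>
        (\<forall>u v. E' u v \<longrightarrow> (u \<in> A' \<and> v \<in> B') \<or> (u \<in> B' \<and> v \<in> A')) \<and>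
        (\<forall>v \<in> A'. degree (f ` V) E' v = a) \<and> (\<forall>v \<in> B'. degree (f ` V) E' v = b)"
  proof (rule exI[of _ "f ` A"], rule exI[of _ "f ` B"], intro conjI)
    show "f ` A \<union> f ` B = f ` V" using AB by auto
    show "f ` A \<inter> f ` B = {}" using inj_on_image_Int[OF inj, of A B] AB by auto
    show "\<forall>u v. E' u v \<longrightarrow> u \<in> f ` A \<and> v \<in> f ` B \<or> u \<in> f ` B \<and> v \<in> f ` A"
      unfolding E'_def using AB(3) by blast
    show "\<forall>v\<in>f ` A. degree (f ` V) E' v = a" using deg AB by auto
    show "\<forall>v\<in>f ` B. degree (f ` V) E' v = b" using deg AB by auto
  qed
  then have "bipartite_biregular a b g (f ` V) E'" unfolding bipartite_biregular_def using sg' gi' by blast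
  moreover have "card (f ` V) = card V" using inj by (simp add: card_image)
  ultimately show ?thesis by blast
qed

lemma incidence_bb:
  fixes Pt :: "'p set" and Bl :: "'p set set"
  assumes fP: "finite Pt" and fB: "finite Bl" and bl: "\<forall>t\<in>Bl. t \<subseteq> Pt \<and> card t = 3"
    and lin: "\<And>t t' p q. t \<in> Bl \<Longrightarrow> t' \<in> Bl \<Longrightarrow> p \<in> t \<Longrightarrow> q \<in> t \<Longrightarrow> p \<in> t' \<Longrightarrow> q \<in> t' \<Longrightarrow> p \<noteq> q \<Longrightarrow> t = t'"
    and deg: "\<forall>p\<in>Pt. card {t \<in> Bl. p \<in> t} = n"
    and tri: "p1 \<in> Pt" "p2 \<in> Pt" "p3 \<in> Pt" "p1 \<noteq> p2" "p2 \<noteq> p3" "p1 \<noteq> p3"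
      "t1 \<in> Bl" "t2 \<in> Bl" "t3 \<in> Bl" "t1 \<noteq> t2" "t2 \<noteq> t3" "t1 \<noteq> t3"
      "p1 \<in> t1" "p2 \<in> t1" "p2 \<in> t2" "p3 \<in> t2" "p3 \<in> t3" "p1 \<in> t3"
  shows "bipartite_biregular 3 n 6 (incidence_vertices Pt Bl) (incidence_adj Pt Bl) \<and>
    3 * card Bl = n * card Pt \<and> card (incidence_vertices Pt Bl) = card Pt + card Bl"
proof -
  let ?V = "incidence_vertices Pt Bl" and ?E = "incidence_adj Pt Bl"
  have adjI: "\<And>u v. ?E u v \<longleftrightarrow> (\<exists>p t. p \<in> Pt \<and> t \<in> Bl \<and> p \<in> t \<and> ((u = Inl p \<and> v = Inr t) \<or> (u = Inr t \<and> v = Inl p)))"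
  proof -
    fix u v show "?E u v \<longleftrightarrow> (\<exists>p t. p \<in> Pt \<and> t \<in> Bl \<and> p \<in> t \<and> ((u = Inl p \<and> v = Inr t) \<or> (u = Inr t \<and> v = Inl p)))"
      by (cases u; cases v) auto
  qed
  have sg: "simple_graph ?V ?E"
    unfolding simple_graph_def incidence_vertices_def
    using fP fB by (auto simp: adjI)
  let ?A = "Inr ` Bl :: ('p + 'p set) set" and ?B = "Inl ` Pt :: ('p + 'p set) set"
  have part: "?A \<union> ?B = ?V" "?A \<inter> ?B = {}" "\<forall>u v. ?E u v \<longrightarrow> (u \<in> ?A \<and> v \<in> ?B) \<or> (u \<in> ?B \<and> v \<in> ?A)"
    unfolding incidence_vertices_def by (auto simp: adjI)
  have nc4: False if e: "?E u v" "?E v w" "?E w z" "?E z u" "u \<noteq> w" "v \<noteq> z" for u v w z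
  proof -
    consider (l) p t q t' where "u = Inl p" "v = Inr t" "w = Inl q" "z = Inr t'" "p \<in> t" "q \<in> t" "p \<in> t'" "q \<in> t'"
       "t \<in> Bl" "t' \<in> Bl"
      | (r) p t q t' where "u = Inr t" "v = Inl p" "w = Inr t'" "z = Inl q" "p \<in> t" "q \<in> t" "p \<in> t'" "q \<in> t'"
       "t \<in> Bl" "t' \<in> Bl"
      using e(1-4) unfolding adjI by auto
    then show False
    proof cases
      case l then show False using lin e(5,6) by blast
    next
      case r then show False using lin e(5,6) by blast
    qed
  qed
  have ge6: "\<And>xs. is_cycle ?V ?E xs \<Longrightarrow> 6 \<le> length xs"
    using cycles_ge6[OF sg part] nc4 by blast
  let ?xs = "[Inl p1, Inr t1, Inl p2, Inr t2, Inl p3, Inr t3] :: ('p + 'p set) list"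
  have cyc: "is_cycle ?V ?E ?xs"
    unfolding is_cycle_def
  proof (intro conjI)
    show "3 \<le> length ?xs" by simp
    show "distinct ?xs" using tri by simp
    show "set ?xs \<subseteq> ?V" using tri unfolding incidence_vertices_def by auto
    show "\<forall>i<length ?xs. ?E (?xs ! i) (?xs ! ((i + 1) mod length ?xs))"
    proof (intro allI impI)
      fix i assume "i < length ?xs"
      then have "i < 6" by simp
      then have "i = 0 \<or> i = 1 \<or> i = 2 \<or> i = 3 \<or> i = 4 \<or> i = 5" by linarith
      then show "?E (?xs ! i) (?xs ! ((i + 1) mod length ?xs))" using tri by auto
    qed
  qed
  have gi: "has_girth ?V ?E 6"
  proof -
    have "length ?xs = 6" by simp
    then show ?thesis unfolding has_girth_def using cyc ge6 by blast
  qed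
  have dA: "\<forall>v \<in> ?A. degree ?V ?E v = 3"
  proof
    fix v :: "'p + 'p set" assume "v \<in> ?A"
    then obtain t where t: "t \<in> Bl" "v = Inr t" by blast
    have "{w \<in> ?V. ?E v w} = Inl ` t" using t bl unfolding incidence_vertices_def by (auto simp: adjI)
    then show "degree ?V ?E v = 3" unfolding degree_def using t bl by (simp add: card_image)
  qed
  have dB: "\<forall>v \<in> ?B. degree ?V ?E v = n"
  proof
    fix v :: "'p + 'p set" assume "v \<in> ?B"
    then obtain p where p: "p \<in> Pt" "v = Inl p" by blast
    have "{w \<in> ?V. ?E v w} = Inr ` {t \<in> Bl. p \<in> t}" using p unfolding incidence_vertices_def by (auto simp: adjI)
    then show "degree ?V ?E v = n" unfolding degree_def using p deg by (simp add: card_image)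
  qed
  have bbg: "bipartite_biregular 3 n 6 ?V ?E" unfolding bipartite_biregular_def using sg gi part dA dB by blast
  have fV: "finite ?V" using sg by (simp add: simple_graph_def)
  have symE: "\<forall>u v. ?E u v \<longrightarrow> ?E v u" using sg by (simp add: simple_graph_def)
  have dc: "3 * card ?A = n * card ?B" using double_count[OF fV part symE dA dB] .
  have cA: "card ?A = card Bl" by (simp add: card_image)
  have cB: "card ?B = card Pt" by (simp add: card_image)
  have cV: "card ?V = card Pt + card Bl" unfolding incidence_vertices_def using fP fB
    by (subst card_Un_disjoint) (auto simp: card_image)
  show ?thesis using bbg dc cA cB cV by simp
qed

definition sg3 :: "nat \<Rightarrow> nat \<Rightarrow> nat" where
  "sg3 m s = (if even s then s div 2 else m + s div 2)"
definition tau3 :: "nat \<Rightarrow> nat \<Rightarrow> nat" where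
  "tau3 m z = (if z < m then 2 * z else 2 * (z - m) + 1)"
definition qop :: "nat \<Rightarrow> nat \<Rightarrow> nat \<Rightarrow> nat" where
  "qop m x y = sg3 m ((x + y) mod (2 * m))"
definition solve :: "nat \<Rightarrow> nat \<Rightarrow> nat \<Rightarrow> nat" where
  "solve m a z = (tau3 m z + 2 * m - a) mod (2 * m)"
definition nx :: "nat \<Rightarrow> nat" where "nx i = (if i = 2 then 0 else i + 1)"
definition pv :: "nat \<Rightarrow> nat" where "pv i = (if i = 0 then 2 else i - 1)"

lemma layer_facts:
  assumes "i < (3::nat)"
  shows "nx i \<noteq> i" "nx (nx i) \<noteq> i" "nx (nx i) \<noteq> nx i" "nx i < 3" "pv i < 3" "nx (pv i) = i" "pv (nx i) = i"
  using assms by (auto simp: nx_def pv_def)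

lemma layer_cases: "i < (3::nat) \<Longrightarrow> j < 3 \<Longrightarrow> i \<noteq> j \<Longrightarrow> j = nx i \<or> i = nx j"
  by (auto simp: nx_def)

lemma sg3_lt: "s < 2 * m \<Longrightarrow> sg3 m s < 2 * m"
  by (auto simp: sg3_def)

lemma sg3_tau3: "z < 2 * m \<Longrightarrow> sg3 m (tau3 m z) = z"
  by (auto simp: sg3_def tau3_def)

lemma tau3_sg3: "s < 2 * m \<Longrightarrow> tau3 m (sg3 m s) = s"
  by (auto simp: sg3_def tau3_def elim!: evenE oddE)

lemma tau3_lt: "z < 2 * m \<Longrightarrow> tau3 m z < 2 * m"
  by (auto simp: tau3_def)

lemma qop_lt: "0 < m \<Longrightarrow> qop m x y < 2 * m"
  unfolding qop_def by (rule sg3_lt) simp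

lemma qop_comm: "qop m x y = qop m y x"
  by (simp add: qop_def add.commute)

lemma qop_cancel:
  assumes "0 < m" "y < 2 * m" "y' < 2 * m" "qop m x y = qop m x y'"
  shows "y = y'"
proof -
  have "tau3 m (qop m x y) = tau3 m (qop m x y')" using assms by simp
  then have "(x + y) mod (2 * m) = (x + y') mod (2 * m)"
    unfolding qop_def using assms(1) by (simp add: tau3_sg3)
  then have "y mod (2 * m) = y' mod (2 * m)" by (simp add: nat_mod_eq_iff)
  then show ?thesis using assms by simp
qed

lemma qop_diag: "x < 2 * m \<Longrightarrow> qop m x x = (if x < m then x else x - m)"
proof -
  assume x: "x < 2 * m"
  show ?thesis
  proof (cases "x < m")
    case True
    then have "(x + x) mod (2 * m) = 2 * x" by simp
    then show ?thesis using True by (simp add: qop_def sg3_def)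
  next
    case False
    then have "(x + x) mod (2 * m) = (x + x - 2 * m) mod (2 * m)" by (simp add: le_mod_geq)
    also have "\<dots> = x + x - 2 * m" using x by simp
    also have "\<dots> = 2 * (x - m)" by simp
    finally have "(x + x) mod (2 * m) = 2 * (x - m)" .
    then show ?thesis using False by (simp add: qop_def sg3_def)
  qed
qed

lemma solve_props:
  assumes "0 < m" "z < 2 * m" "a < 2 * m"
  shows "solve m a z < 2 * m" "qop m a (solve m a z) = z"
proof -
  show "solve m a z < 2 * m" unfolding solve_def using assms by simp
  have "(a + solve m a z) mod (2 * m) = tau3 m z"
  proof -
    have "(a + solve m a z) mod (2 * m) = (a + (tau3 m z + 2 * m - a)) mod (2 * m)"
      unfolding solve_def by (simp add: mod_add_right_eq)
    also have "a + (tau3 m z + 2 * m - a) = tau3 m z + 2 * m" using assms by simp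
    also have "(tau3 m z + 2 * m) mod (2 * m) = tau3 m z" using tau3_lt[OF assms(2)] by simp
    finally show ?thesis .
  qed
  then show "qop m a (solve m a z) = z" unfolding qop_def using assms sg3_tau3 by simp
qed


lemma solve_qop: "0 < m \<Longrightarrow> x < 2 * m \<Longrightarrow> y < 2 * m \<Longrightarrow> solve m x (qop m x y) = y"
  using solve_props[of m "qop m x y" x] qop_lt qop_cancel by metis

lemma qop_ne_self:
  assumes "0 < m" "x < 2 * m" "y < 2 * m" "x \<noteq> y"
  shows "\<not> (qop m x y = x \<and> x < m)"
proof
  assume h: "qop m x y = x \<and> x < m"
  then have "qop m x y = qop m x x" using qop_diag[OF assms(2)] by simp
  then show False using qop_cancel[OF assms(1,3,2)] assms(4) by simp
qed

definition blk1 :: "nat \<Rightarrow> (nat \<times> nat) set" where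
  "blk1 x = {(x, 0), (x, 1), (x, 2)}"
definition blk3 :: "nat \<Rightarrow> nat \<Rightarrow> nat \<Rightarrow> nat \<Rightarrow> (nat \<times> nat) set" where
  "blk3 m x y i = {(x, i), (y, i), (qop m x y, nx i)}"
definition Pts :: "nat \<Rightarrow> (nat \<times> nat) set" where
  "Pts m = {0..<2 * m} \<times> {0..<3}"
definition Bls :: "nat \<Rightarrow> (nat \<times> nat) set set" where
  "Bls m = blk1 ` {0..<m} \<union> (\<lambda>(x, y, i). blk3 m x y i) ` {(x, y, i). x < 2 * m \<and> y < 2 * m \<and> x \<noteq> y \<and> i < 3}"
definition line :: "nat \<Rightarrow> nat \<times> nat \<Rightarrow> nat \<times> nat \<Rightarrow> (nat \<times> nat) set" where
  "line m p q = (if snd p = snd q then blk3 m (fst p) (fst q) (snd p)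
     else if fst p = fst q \<and> fst p < m then blk1 (fst p)
     else if snd q = nx (snd p) then blk3 m (fst p) (solve m (fst p) (fst q)) (snd p)
     else blk3 m (fst q) (solve m (fst q) (fst p)) (snd q))"
definition mt :: "nat \<Rightarrow> nat \<times> nat \<Rightarrow> nat \<times> nat" where
  "mt m p = (if m \<le> fst p then (fst p - m, nx (snd p)) else (fst p + m, pv (snd p)))"

lemma blk3_comm: "blk3 m x y i = blk3 m y x i"
  unfolding blk3_def by (auto simp: qop_comm)

lemma Bls_cases:
  assumes "t \<in> Bls m"
  obtains (b1) x where "x < m" "t = blk1 x"
    | (b3) x y i where "x < 2 * m" "y < 2 * m" "x \<noteq> y" "i < 3" "t = blk3 m x y i"
  using assms unfolding Bls_def by auto

lemma blk3_in: "x < 2 * m \<Longrightarrow> y < 2 * m \<Longrightarrow> x \<noteq> y \<Longrightarrow> i < 3 \<Longrightarrow> blk3 m x y i \<in> Bls m"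
  unfolding Bls_def by (rule UnI2, rule image_eqI[of _ _ "(x, y, i)"]) auto

lemma blk1_in: "x < m \<Longrightarrow> blk1 x \<in> Bls m"
  unfolding Bls_def by auto

lemma line_apex:
  assumes m: "0 < m" and xy: "x < 2 * m" "y < 2 * m" "x \<noteq> y" and i: "i < 3"
  shows "line m (x, i) (qop m x y, nx i) = blk3 m x y i"
    and "line m (qop m x y, nx i) (x, i) = blk3 m x y i"
proof -
  have ne: "\<not> (x = qop m x y \<and> x < m)" using qop_ne_self[OF m xy] by auto
  have ne': "\<not> (qop m x y = x \<and> qop m x y < m)" using qop_ne_self[OF m xy] by auto
  have s: "solve m x (qop m x y) = y" using solve_qop[OF m xy(1,2)] .
  have "line m (x, i) (qop m x y, nx i) = blk3 m x (solve m x (qop m x y)) i"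
    unfolding line_def using layer_facts(1)[OF i] ne by auto
  then show "line m (x, i) (qop m x y, nx i) = blk3 m x y i" using s by simp
  have "line m (qop m x y, nx i) (x, i) = blk3 m x (solve m x (qop m x y)) i"
    unfolding line_def using layer_facts(1,2)[OF i] ne' by auto
  then show "line m (qop m x y, nx i) (x, i) = blk3 m x y i" using s by simp
qed

lemma line_blk3:
  assumes m: "0 < m" and xy: "x < 2 * m" "y < 2 * m" "x \<noteq> y" and i: "i < 3"
    and pq: "p \<in> blk3 m x y i" "q \<in> blk3 m x y i" "p \<noteq> q"
  shows "blk3 m x y i = line m p q"
proof -
  have yx: "y < 2 * m" "x < 2 * m" "y \<noteq> x" using xy by auto
  have c: "qop m y x = qop m x y" by (rule qop_comm)
  have L1: "line m (x, i) (qop m x y, nx i) = blk3 m x y i" "line m (qop m x y, nx i) (x, i) = blk3 m x y i"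
    using line_apex[OF m xy i] by auto
  have L2: "line m (y, i) (qop m x y, nx i) = blk3 m x y i" "line m (qop m x y, nx i) (y, i) = blk3 m x y i"
    using line_apex[OF m yx i] c blk3_comm by metis+
  have L3: "line m (x, i) (y, i) = blk3 m x y i" "line m (y, i) (x, i) = blk3 m x y i"
    unfolding line_def using blk3_comm by auto
  have "p \<in> {(x, i), (y, i), (qop m x y, nx i)}" "q \<in> {(x, i), (y, i), (qop m x y, nx i)}"
    using pq unfolding blk3_def by auto
  then show ?thesis using L1 L2 L3 pq(3) by auto
qed

lemma line_blk1:
  assumes x: "x < m" and pq: "p \<in> blk1 x" "q \<in> blk1 x" "p \<noteq> q"
  shows "blk1 x = line m p q"
proof -
  have f: "fst p = x" "fst q = x" using pq(1,2) by (auto simp: blk1_def)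
  then have "snd p \<noteq> snd q" using pq(3) by (metis prod.expand)
  then show ?thesis using f x by (simp add: line_def)
qed

lemma line_unique:
  assumes m: "0 < m" and t: "t \<in> Bls m" and pq: "p \<in> t" "q \<in> t" "p \<noteq> q"
  shows "t = line m p q"
  using t
proof (cases rule: Bls_cases)
  case (b1 x) then show ?thesis using line_blk1 pq by blast
next
  case (b3 x y i) then show ?thesis using line_blk3[OF m] pq by blast
qed

lemma Bls_sub: "0 < m \<Longrightarrow> t \<in> Bls m \<Longrightarrow> t \<subseteq> Pts m"
  by (erule Bls_cases) (auto simp: blk1_def blk3_def Pts_def qop_lt layer_facts)

lemma Bls_card: "t \<in> Bls m \<Longrightarrow> card t = 3"
proof (erule Bls_cases)
  fix x assume "t = blk1 x" then show "card t = 3" by (simp add: blk1_def)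
next
  fix x y i assume h: "x \<noteq> y" "i < 3" "t = blk3 m x y i"
  have "nx i \<noteq> i" using layer_facts(1)[OF h(2)] .
  then show "card t = 3" using h by (simp add: blk3_def)
qed

lemma Bls_fin: "finite (Bls m)"
proof -
  have "{(x, y, i). x < 2 * m \<and> y < 2 * m \<and> x \<noteq> y \<and> i < 3} \<subseteq> {0..<2*m} \<times> {0..<2*m} \<times> {0..<(3::nat)}"
    by auto
  then have "finite {(x, y, i). x < 2 * m \<and> y < 2 * m \<and> x \<noteq> y \<and> i < (3::nat)}"
    using finite_subset by blast
  then show ?thesis unfolding Bls_def by simp
qed

lemma mt_Pts: "p \<in> Pts m \<Longrightarrow> mt m p \<in> Pts m"
  unfolding mt_def Pts_def using layer_facts by (auto simp: mem_Times_iff)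

lemma mt_ne: "0 < m \<Longrightarrow> mt m p \<noteq> p"
  unfolding mt_def by (cases p) auto

lemma mt_mt: "p \<in> Pts m \<Longrightarrow> mt m (mt m p) = p"
proof -
  assume p: "p \<in> Pts m"
  obtain a i where ai: "p = (a, i)" "a < 2 * m" "i < 3" using p unfolding Pts_def by auto
  show ?thesis
  proof (cases "m \<le> a")
    case True
    then have "mt m p = (a - m, nx i)" using ai by (simp add: mt_def)
    moreover have "\<not> m \<le> a - m" using ai True by linarith
    ultimately show ?thesis using ai True layer_facts[OF ai(3)] by (simp add: mt_def)
  next
    case False
    then have "mt m p = (a + m, pv i)" using ai by (simp add: mt_def)
    then show ?thesis using ai False layer_facts[OF ai(3)] by (simp add: mt_def)
  qed
qed

lemma nomate0:
  assumes m: "0 < m" and a: "m \<le> a" "a < 2 * m" and i: "i < 3" and t: "t \<in> Bls m"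
    and in1: "(a, i) \<in> t" and in2: "(a - m, nx i) \<in> t"
  shows False
  using t
proof (cases rule: Bls_cases)
  case (b1 x)
  then show False using in1 in2 m a unfolding blk1_def by auto
next
  case (b3 x y k)
  have lk: "nx k \<noteq> k" "nx (nx k) \<noteq> k" "nx (nx k) \<noteq> nx k" using layer_facts[OF b3(4)] by auto
  have li: "nx i \<noteq> i" using layer_facts[OF i] by auto
  have dg: "qop m a a = a - m" using qop_diag[OF a(2)] a by simp
  have m1: "(a, i) = (x, k) \<or> (a, i) = (y, k) \<or> (a, i) = (qop m x y, nx k)"
    using in1 b3(5) unfolding blk3_def by auto
  have m2: "(a - m, nx i) = (x, k) \<or> (a - m, nx i) = (y, k) \<or> (a - m, nx i) = (qop m x y, nx k)"
    using in2 b3(5) unfolding blk3_def by auto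
  from m1 show False
  proof (elim disjE)
    assume h: "(a, i) = (x, k)"
    then have "qop m x y = a - m" using m2 li by auto
    then have "qop m a y = qop m a a" using h dg by simp
    then have "y = a" using qop_cancel[OF m b3(2) a(2)] by simp
    then show False using h b3(3) by simp
  next
    assume h: "(a, i) = (y, k)"
    then have "qop m x y = a - m" using m2 li by auto
    then have "qop m a x = qop m a a" using h dg by (simp add: qop_comm)
    then have "x = a" using qop_cancel[OF m b3(1) a(2)] by simp
    then show False using h b3(3) by simp
  next
    assume h: "(a, i) = (qop m x y, nx k)"
    then have "i = nx k" by simp
    then show False using m2 lk by auto
  qed
qed

lemma nomate:
  assumes m: "0 < m" and p: "p \<in> Pts m" and t: "t \<in> Bls m" and in1: "p \<in> t" and in2: "mt m p \<in> t"
  shows False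
proof -
  obtain a i where ai: "p = (a, i)" "a < 2 * m" "i < 3" using p unfolding Pts_def by auto
  show False
  proof (cases "m \<le> a")
    case True
    then have "mt m p = (a - m, nx i)" using ai by (simp add: mt_def)
    then show False using nomate0[OF m True ai(2) ai(3) t] in1 in2 ai by simp
  next
    case False
    let ?q = "mt m p"
    have q: "?q = (a + m, pv i)" using ai False by (simp add: mt_def)
    have "mt m ?q = p" using mt_mt[OF p] .
    then have "mt m ?q = (a + m - m, nx (pv i))" using q ai layer_facts[OF ai(3)] by simp
    have h: "m \<le> a + m" "a + m < 2 * m" "pv i < 3" using False ai layer_facts[OF ai(3)] by auto
    have "(a + m - m, nx (pv i)) \<in> t" using in1 ai layer_facts[OF ai(3)] by simp
    then show False using nomate0[OF m h t] in2 q by simp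
  qed
qed

lemma coverage:
  assumes m: "0 < m" and p: "p \<in> Pts m" and q: "q \<in> Pts m" and pq: "p \<noteq> q" and qm: "q \<noteq> mt m p"
  shows "\<exists>t \<in> Bls m. p \<in> t \<and> q \<in> t"
proof -
  obtain a i where ai: "p = (a, i)" "a < 2 * m" "i < 3" using p unfolding Pts_def by auto
  obtain b j where bj: "q = (b, j)" "b < 2 * m" "j < 3" using q unfolding Pts_def by auto
  show ?thesis
  proof (cases "i = j")
    case True
    then have "a \<noteq> b" using pq ai bj by simp
    then have "blk3 m a b i \<in> Bls m" using blk3_in ai bj by blast
    then show ?thesis using ai bj True unfolding blk3_def by blast
  next
    case ij: False
    show ?thesis
    proof (cases "a = b \<and> a < m")
      case True
      then have "blk1 a \<in> Bls m" using blk1_in by blast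
      moreover have "p \<in> blk1 a" "q \<in> blk1 a" using ai bj True unfolding blk1_def by auto
      ultimately show ?thesis by blast
    next
      case nab: False
      consider "j = nx i" | "i = nx j" using layer_cases[OF ai(3) bj(3) ij] by blast
      then show ?thesis
      proof cases
        case 1
        define y where "y = solve m a b"
        have y: "y < 2 * m" "qop m a y = b" using solve_props[OF m bj(2) ai(2)] y_def by auto
        have "y \<noteq> a"
        proof
          assume "y = a"
          then have "qop m a a = b" using y by simp
          then have "b = (if a < m then a else a - m)" using qop_diag[OF ai(2)] by simp
          then show False using nab qm ai bj 1 by (auto simp: mt_def split: if_splits)
        qed
        then have "blk3 m a y i \<in> Bls m" using blk3_in ai y by metis
        moreover have "p \<in> blk3 m a y i" "q \<in> blk3 m a y i" using ai bj y 1 unfolding blk3_def by auto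
        ultimately show ?thesis by blast
      next
        case 2
        define y where "y = solve m b a"
        have y: "y < 2 * m" "qop m b y = a" using solve_props[OF m ai(2) bj(2)] y_def by auto
        have "y \<noteq> b"
        proof
          assume "y = b"
          then have "qop m b b = a" using y by simp
          then have ab: "a = (if b < m then b else b - m)" using qop_diag[OF bj(2)] by simp
          then have "m \<le> b" "a = b - m" using nab by (auto split: if_splits)
          then have "mt m q = p" using ai bj 2 by (simp add: mt_def)
          then have "q = mt m p" using mt_mt[OF q] by simp
          then show False using qm by simp
        qed
        then have "blk3 m b y j \<in> Bls m" using blk3_in bj y by metis
        moreover have "p \<in> blk3 m b y j" "q \<in> blk3 m b y j" using ai bj y 2 unfolding blk3_def by auto
        ultimately show ?thesis by blast
      qed
    qed
  qed
qed

lemma Pts_card: "card (Pts m) = 6 * m"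
  unfolding Pts_def by (simp add: card_cartesian_product)

lemma degree_pt:
  assumes m: "0 < m" and p: "p \<in> Pts m"
  shows "card {t \<in> Bls m. p \<in> t} = 3 * m - 1"
proof -
  let ?I = "{t \<in> Bls m. p \<in> t}"
  have fI: "finite ?I" using Bls_fin by simp
  have c: "card (\<Union>t\<in>?I. id t - {p}) = 2 * card ?I"
  proof (rule disj_count[OF fI])
    show "\<And>i. i \<in> ?I \<Longrightarrow> p \<in> id i \<and> card (id i) = 3" using Bls_card by auto
    show "\<And>i j. i \<in> ?I \<Longrightarrow> j \<in> ?I \<Longrightarrow> i \<noteq> j \<Longrightarrow> id i \<inter> id j \<subseteq> {p}"
    proof -
      fix i j assume ij: "i \<in> ?I" "j \<in> ?I" "i \<noteq> j"
      show "id i \<inter> id j \<subseteq> {p}"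
      proof
        fix q assume q: "q \<in> id i \<inter> id j"
        show "q \<in> {p}"
        proof (rule ccontr)
          assume "q \<notin> {p}"
          then have "p \<noteq> q" by auto
          then have "i = line m p q" "j = line m p q" using line_unique[OF m] ij q by auto
          then show False using ij(3) by simp
        qed
      qed
    qed
  qed
  have "(\<Union>t\<in>?I. id t - {p}) = Pts m - {p, mt m p}"
  proof
    show "(\<Union>t\<in>?I. id t - {p}) \<subseteq> Pts m - {p, mt m p}"
    proof
      fix x assume "x \<in> (\<Union>t\<in>?I. id t - {p})"
      then obtain t where t: "t \<in> Bls m" "p \<in> t" "x \<in> t" "x \<noteq> p" by auto
      have "x \<in> Pts m" using Bls_sub[OF m t(1)] t(3) by blast
      moreover have "x \<noteq> mt m p" using nomate[OF m p t(1,2)] t(3) by blast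
      ultimately show "x \<in> Pts m - {p, mt m p}" using t(4) by simp
    qed
    show "Pts m - {p, mt m p} \<subseteq> (\<Union>t\<in>?I. id t - {p})"
    proof
      fix x assume x: "x \<in> Pts m - {p, mt m p}"
      then obtain t where t: "t \<in> Bls m" "p \<in> t" "x \<in> t" using coverage[OF m p, of x] by auto
      then show "x \<in> (\<Union>t\<in>?I. id t - {p})" using x by auto
    qed
  qed
  moreover have "card (Pts m - {p, mt m p}) = 6 * m - 2"
  proof -
    have "{p, mt m p} \<subseteq> Pts m" using p mt_Pts[OF p] by auto
    moreover have "card {p, mt m p} = 2" using mt_ne[OF m, of p] by auto
    ultimately show ?thesis using Pts_card[of m] by (simp add: card_Diff_subset Pts_def)
  qed
  ultimately have "2 * card ?I = 6 * m - 2" using c by simp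
  then show ?thesis by linarith
qed

lemma set_ne_wit: "x \<in> A \<Longrightarrow> x \<notin> B \<Longrightarrow> A \<noteq> B"
  by blast

lemma set_ne_wit2: "x \<notin> A \<Longrightarrow> x \<in> B \<Longrightarrow> A \<noteq> B"
  by blast

lemma triangle:
  assumes m: "0 < m"
  shows "\<exists>p1 p2 p3 t1 t2 t3. p1 \<in> Pts m \<and> p2 \<in> Pts m \<and> p3 \<in> Pts m \<and> p1 \<noteq> p2 \<and> p2 \<noteq> p3 \<and> p1 \<noteq> p3 \<and>
      t1 \<in> Bls m \<and> t2 \<in> Bls m \<and> t3 \<in> Bls m \<and> t1 \<noteq> t2 \<and> t2 \<noteq> t3 \<and> t1 \<noteq> t3 \<and>
      p1 \<in> t1 \<and> p2 \<in> t1 \<and> p2 \<in> t2 \<and> p3 \<in> t2 \<and> p3 \<in> t3 \<and> p1 \<in> t3"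
proof (cases "m = 1")
  case True
  have q: "qop 1 0 1 = 1" by (simp add: qop_def sg3_def)
  have n: "nx 0 = 1" "nx 1 = 2" "nx 2 = 0" by (simp_all add: nx_def)
  have b: "blk3 1 0 1 0 = {(0,0),(1,0),(1,1)}" "blk3 1 0 1 1 = {(0,1),(1,1),(1,2)}" "blk3 1 0 1 2 = {(0,2),(1,2),(1,0)}"
    unfolding blk3_def q n by simp_all
  have i: "blk3 1 0 1 0 \<in> Bls 1" "blk3 1 0 1 1 \<in> Bls 1" "blk3 1 0 1 2 \<in> Bls 1" by (auto intro!: blk3_in)
  have ne1: "blk3 1 0 1 0 \<noteq> blk3 1 0 1 1" unfolding b by (rule set_ne_wit[of "(0,0)"]) simp_all
  have ne2: "blk3 1 0 1 1 \<noteq> blk3 1 0 1 2" unfolding b by (rule set_ne_wit[of "(0,1)"]) simp_all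
  have ne3: "blk3 1 0 1 0 \<noteq> blk3 1 0 1 2" unfolding b by (rule set_ne_wit[of "(0,0)"]) simp_all
  note ne = ne1 ne2 ne3
  have pts: "(1,0) \<in> Pts 1" "(1,1) \<in> Pts 1" "(1,2) \<in> Pts (1::nat)" by (simp_all add: Pts_def)
  have mem: "((1::nat),(0::nat)) \<in> blk3 1 0 1 0" "((1::nat),(1::nat)) \<in> blk3 1 0 1 0" "((1::nat),(1::nat)) \<in> blk3 1 0 1 1"
     "((1::nat),(2::nat)) \<in> blk3 1 0 1 1" "((1::nat),(2::nat)) \<in> blk3 1 0 1 2" "((1::nat),(0::nat)) \<in> blk3 1 0 1 2"
    unfolding b by simp_all
  have pne: "((1::nat),(0::nat)) \<noteq> (1,1)" "((1::nat),(1::nat)) \<noteq> (1,2)" "((1::nat),(0::nat)) \<noteq> (1,2)" by simp_all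
  show ?thesis unfolding True using pts i ne mem pne by blast
next
  case False
  then have m2: "2 \<le> m" using m by linarith
  have q: "qop m 1 (2 * m - 1) = 0"
  proof -
    have "(1 + (2 * m - 1)) mod (2 * m) = 0" using m by simp
    then show ?thesis by (simp add: qop_def sg3_def)
  qed
  have n: "nx 0 = 1" by (simp add: nx_def)
  have b2: "blk3 m 1 (2 * m - 1) 0 = {(1,0),(2 * m - 1,0),(0,1)}" unfolding blk3_def q n by simp
  have b3: "blk3 m 0 1 0 = {(0,0),(1,0),(qop m 0 1,1)}" unfolding blk3_def n by simp
  have i: "blk1 0 \<in> Bls m" "blk3 m 1 (2 * m - 1) 0 \<in> Bls m" "blk3 m 0 1 0 \<in> Bls m"
    using m m2 by (auto intro!: blk3_in blk1_in)
  have ne1: "blk1 0 \<noteq> blk3 m 1 (2 * m - 1) 0"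
    unfolding b2 by (rule set_ne_wit[of "(0,2)"]) (simp_all add: blk1_def)
  have ne2: "blk1 0 \<noteq> blk3 m 0 1 0"
    unfolding b3 by (rule set_ne_wit[of "(0,2)"]) (simp_all add: blk1_def)
  have ne3: "blk3 m 1 (2 * m - 1) 0 \<noteq> blk3 m 0 1 0"
  proof (rule set_ne_wit2[of "(0,0)"])
    show "(0, 0) \<notin> blk3 m 1 (2 * m - 1) 0" unfolding b2 using m2 by simp
    show "(0, 0) \<in> blk3 m 0 1 0" unfolding b3 by simp
  qed
  have pts: "(0,0) \<in> Pts m" "(0,1) \<in> Pts m" "(1,0) \<in> Pts m" using m2 by (simp_all add: Pts_def)
  have mem: "(0,0) \<in> blk1 0" "(0,1) \<in> blk1 0" "(0,1) \<in> blk3 m 1 (2 * m - 1) 0" "(1,0) \<in> blk3 m 1 (2 * m - 1) 0"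
    "(1,0) \<in> blk3 m 0 1 0" "(0,0) \<in> blk3 m 0 1 0"
    unfolding b2 b3 by (simp_all add: blk1_def)
  have pne: "((0::nat),(0::nat)) \<noteq> (0,1)" "((0::nat),(1::nat)) \<noteq> (1,0)" "((0::nat),(0::nat)) \<noteq> (1,0)" by simp_all
  show ?thesis using pts i ne1 ne2 ne3 mem pne by blast
qed

lemma construction:
  assumes m: "0 < m"
  shows "bipartite_biregular 3 (3 * m - 1) 6 (incidence_vertices (Pts m) (Bls m)) (incidence_adj (Pts m) (Bls m)) \<and>
    3 * card (Bls m) = (3 * m - 1) * card (Pts m) \<and>
    card (incidence_vertices (Pts m) (Bls m)) = card (Pts m) + card (Bls m)"
proof -
  obtain p1 p2 p3 t1 t2 t3 where tri: "p1 \<in> Pts m" "p2 \<in> Pts m" "p3 \<in> Pts m" "p1 \<noteq> p2" "p2 \<noteq> p3" "p1 \<noteq> p3"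
      "t1 \<in> Bls m" "t2 \<in> Bls m" "t3 \<in> Bls m" "t1 \<noteq> t2" "t2 \<noteq> t3" "t1 \<noteq> t3"
      "p1 \<in> t1" "p2 \<in> t1" "p2 \<in> t2" "p3 \<in> t2" "p3 \<in> t3" "p1 \<in> t3"
    using triangle[OF m] by blast
  show ?thesis
  proof (rule incidence_bb[OF _ Bls_fin _ _ _ tri])
    show "finite (Pts m)" unfolding Pts_def by simp
    show "\<forall>t\<in>Bls m. t \<subseteq> Pts m \<and> card t = 3" using Bls_sub[OF m] Bls_card by blast
    show "\<And>t t' p q. t \<in> Bls m \<Longrightarrow> t' \<in> Bls m \<Longrightarrow> p \<in> t \<Longrightarrow> q \<in> t \<Longrightarrow> p \<in> t' \<Longrightarrow> q \<in> t' \<Longrightarrow> p \<noteq> q \<Longrightarrow> t = t'"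
      using line_unique[OF m] by metis
    show "\<forall>p\<in>Pts m. card {t \<in> Bls m. p \<in> t} = 3 * m - 1" using degree_pt[OF m] by blast
  qed
qed

theorem mainTheorem2:
  fixes n :: nat
  assumes "n > 0" and "n mod 3 = 2"
  shows "(\<exists>(V :: nat set) E. bb_cage 3 n 6 V E \<and> 3 * card V = 3 * (2 + 2 * n) + (2 + 2 * n) * n)
    \<and> (\<forall>(V :: 'a set) E. bb_cage 3 n 6 V E \<longrightarrow>
         (\<exists>(P :: nat set) T x. steiner_triple_system P T \<and> card P = 2 * n + 3 \<and> x \<in> P \<and>
            graph_iso V E
              (incidence_vertices (del_points P x) (del_triples T x))
              (incidence_adj (del_points P x) (del_triples T x))))"
proof -
  define m where "m = (n + 1) div 3"
  have m: "0 < m" "n = 3 * m - 1" "6 * m = 2 * n + 2" using assms unfolding m_def by presburger+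
  have con: "bipartite_biregular 3 n 6 (incidence_vertices (Pts m) (Bls m)) (incidence_adj (Pts m) (Bls m))"
    "3 * card (Bls m) = n * (2 * n + 2)"
    "card (incidence_vertices (Pts m) (Bls m)) = (2 * n + 2) + card (Bls m)"
    using construction[OF m(1)] m Pts_card[of m] by auto
  obtain V0 :: "nat set" and E0 where V0: "bipartite_biregular 3 n 6 V0 E0"
      "card V0 = card (incidence_vertices (Pts m) (Bls m))"
    using transfer_nat[OF con(1)] by blast
  have cV0: "3 * card V0 = 3 * (2 + 2 * n) + (2 + 2 * n) * n" using V0(2) con(2,3) by simp
  have lb: "3 * card V0 \<le> 3 * card V'" if bb: "bipartite_biregular 3 n 6 V' E'" for V' :: "'b set" and E'
  proof -
    obtain A B where sg: "simple_graph V' E'" and g: "has_girth V' E' 6" and AB: "A \<union> B = V'" "A \<inter> B = {}"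
      "\<forall>u v. E' u v \<longrightarrow> (u \<in> A \<and> v \<in> B) \<or> (u \<in> B \<and> v \<in> A)"
      "\<forall>v \<in> A. degree V' E' v = 3" "\<forall>v \<in> B. degree V' E' v = n"
      using bb unfolding bipartite_biregular_def by blast
    note L = lower_bound[OF sg g AB assms(2)]
    have "3 * card V' = n * card B + 3 * card B" using L(2,3) by simp
    also have "\<dots> \<ge> n * (2 * n + 2) + 3 * (2 * n + 2)" using L(1) by (intro add_mono mult_le_mono2)
    finally show ?thesis using cV0 by (simp add: algebra_simps)
  qed
  have cage0: "bb_cage 3 n 6 V0 E0" unfolding bb_cage_def using V0(1) lb by fastforce
  have part2: "\<exists>(P :: nat set) T x. steiner_triple_system P T \<and> card P = 2 * n + 3 \<and> x \<in> P \<and>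
            graph_iso V E
              (incidence_vertices (del_points P x) (del_triples T x))
              (incidence_adj (del_points P x) (del_triples T x))"
    if cg: "bb_cage 3 n 6 V E" for V :: "'a set" and E
  proof -
    have bb: "bipartite_biregular 3 n 6 V E" and le: "card V \<le> card V0"
      using cg V0(1) unfolding bb_cage_def by auto
    obtain A B where sg: "simple_graph V E" and g: "has_girth V E 6" and AB: "A \<union> B = V" "A \<inter> B = {}"
      "\<forall>u v. E u v \<longrightarrow> (u \<in> A \<and> v \<in> B) \<or> (u \<in> B \<and> v \<in> A)"
      "\<forall>v \<in> A. degree V E v = 3" "\<forall>v \<in> B. degree V E v = n"
      using bb unfolding bipartite_biregular_def by blast
    note L = lower_bound[OF sg g AB assms(2)]
    have "(n + 3) * card B = 3 * card V" using L(2,3) by (simp add: algebra_simps)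
    also have "\<dots> \<le> 3 * card V0" using le by simp
    also have "\<dots> = (n + 3) * (2 * n + 2)" using cV0 by (simp add: algebra_simps)
    finally have le2: "(n + 3) * card B \<le> (n + 3) * (2 * n + 2)" .
    then have "card B \<le> 2 * n + 2" by (simp only: mult_le_cancel1)
    then have "card B = 2 * n + 2" using L(1) by simp
    then show ?thesis using to_sts[OF sg g AB] by blast
  qed
  show ?thesis using cage0 cV0 part2 by blast
qed

end
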